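(* Let $n\ge2$. For pairs $(\alpha,\beta)\in\{0,\dots,2^n-1\}^2$ define $y_{\alpha,\beta}(x)=(\alpha\dotplus x)\oplus(\beta\dotplus x)$ for $x\in\{0,\dots,2^n-1\}$. Say that a finite list of pairs $(\alpha^{(1)},\beta^{(1)}),\dots,(\alpha^{(m)},\beta^{(m)})$ determines $x$ modulo $2^{n-1}$ if for all $x,x'\in\{0,\dots,2^n-1\}$, $y_{\alpha^{(j)},\beta^{(j)}}(x)=y_{\alpha^{(j)},\beta^{(j)}}(x')$ for all $j=1,\dots,m$ implies $x\equiv x'\pmod{2^{n-1}}$. Let $m(n)$ be the least $m$ for which such a list of $m$ pairs exists. Then $m(2)=1$ and $m(n)=2$ for all $n>2$.
   Context: $a\dotplus b=(a+b)\bmod 2^n$; $\oplus$ is bitwise XOR of $n$-bit integers. *)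

theory Defs
  imports Main
begin

definition yab :: "nat \<Rightarrow> nat \<Rightarrow> nat \<Rightarrow> nat \<Rightarrow> nat" where
  "yab n a b x = xor ((a + x) mod 2 ^ n) ((b + x) mod 2 ^ n)"

definition determines :: "nat \<Rightarrow> (nat \<times> nat) list \<Rightarrow> bool" where
  "determines n ps \<longleftrightarrow>
     (\<forall>(a, b) \<in> set ps. a < 2 ^ n \<and> b < 2 ^ n) \<and>
     (\<forall>x < 2 ^ n. \<forall>x' < 2 ^ n.
        (\<forall>(a, b) \<in> set ps. yab n a b x = yab n a b x') \<longrightarrow>
        x mod 2 ^ (n - 1) = x' mod 2 ^ (n - 1))"

definition mmin :: "nat \<Rightarrow> nat" where
  "mmin n = (LEAST m. \<exists>ps. length ps = m \<and> determines n ps)"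

end

theory Submission
  imports Defs
begin

definition carry :: "nat \<Rightarrow> nat \<Rightarrow> nat \<Rightarrow> bool" where
  "carry x d j \<longleftrightarrow> 2^j \<le> x mod 2^j + d mod 2^j"

lemma carry_div: "(x mod 2^j + d mod 2^j) div 2^j = (if carry x d j then 1 else 0)"
proof -
  have a: "x mod 2^j < (2::nat)^j" "d mod 2^j < (2::nat)^j" by simp_all
  show ?thesis
  proof (cases "carry x d j")
    case True
    have b: "x mod 2^j + d mod 2^j - 2^j < (2::nat)^j" using a by linarith
    show ?thesis using True b unfolding carry_def
      by (simp add: le_div_geq)
  next
    case False
    then show ?thesis unfolding carry_def by simp
  qed
qed

lemma bit_add: "bit (x + d) j = (bit x j \<noteq> (bit d j \<noteq> carry x d j))"
proof -
  define M :: nat where "M = 2^j"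
  have M: "M > 0" by (simp add: M_def)
  have e: "x + d = (x mod M + d mod M) + (x div M + d div M) * M"
    by (simp add: algebra_simps)
  have "(x+d) div M = (x mod M + d mod M) div M + (x div M + d div M)"
    unfolding e using M by simp
  hence "(x+d) div M = (if carry x d j then 1 else 0) + (x div M + d div M)"
    using carry_div[of x j d] by (simp add: M_def)
  thus ?thesis by (cases "carry x d j") (auto simp: bit_iff_odd M_def)
qed

lemma mod_Suc_split: "(x::nat) mod 2^(Suc j) = x mod 2^j + 2^j * (if bit x j then 1 else 0)"
proof -
  have "x mod (2^j * 2) = 2^j * (x div 2^j mod 2) + x mod 2^j" by (rule mod_mult2_eq)
  moreover have "x div 2^j mod 2 = (if bit x j then 1 else 0)"
    by (simp add: bit_iff_odd odd_iff_mod_2_eq_one)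
  ultimately show ?thesis by (simp add: mult.commute)
qed

lemma carry_Suc: "carry x d (Suc j) = (if bit d j = carry x d j then carry x d j else bit x j)"
proof -
  define s where "s = x mod 2^j + d mod 2^j"
  have sd: "s = 2^j * (s div 2^j) + s mod 2^j" by simp
  define r where "r = s mod 2^j"
  have l: "r < (2::nat)^j" by (simp add: r_def)
  have e: "s = 2^j * (if carry x d j then 1 else 0) + r"
    using carry_div[of x j d] sd by (simp add: s_def r_def)
  have "carry x d (Suc j) \<longleftrightarrow> 2 * 2^j \<le> s + 2^j * ((if bit x j then 1 else 0) + (if bit d j then 1 else 0))"
    unfolding carry_def mod_Suc_split s_def by (simp add: algebra_simps)
  also have "\<dots> \<longleftrightarrow> (if bit d j = carry x d j then carry x d j else bit x j)"
    unfolding e using l by (auto split: if_splits)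
  finally show ?thesis .
qed

lemma bit_mod2n: "bit ((p::nat) mod 2^n) j = (j < n \<and> bit p j)"
  by (simp add: take_bit_eq_mod[symmetric] bit_take_bit_iff)

lemma bit_yab0: "j < n \<Longrightarrow> bit (yab n 0 d x) j = (bit d j \<noteq> carry x d j)"
  unfolding yab_def by (auto simp add: bit_xor_iff bit_mod2n bit_add[of x d] add.commute[of d x])

lemma step:
  assumes "Suc i < n" "x mod 2^i = x' mod 2^i" "yab n 0 d x = yab n 0 d x'"
    "bit d i \<noteq> carry x d i"
  shows "bit x i = bit x' i"
proof -
  have c: "carry x d i = carry x' d i" using assms(2) by (simp add: carry_def)
  have "carry x d (Suc i) = carry x' d (Suc i)"
    using bit_yab0[OF assms(1), of d x] bit_yab0[OF assms(1), of d x'] assms(3) by auto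
  thus ?thesis using assms(4) c by (simp add: carry_Suc split: if_splits)
qed

lemma det_gen:
  assumes "\<forall>(a,b)\<in>set ps. a<2^n \<and> b<2^n" "\<forall>(a,b)\<in>set ps. a=0"
    "\<And>x i. Suc i < n \<Longrightarrow> \<exists>p\<in>set ps. bit (snd p) i \<noteq> carry x (snd p) i"
  shows "determines n ps"
  unfolding determines_def
proof (intro conjI assms(1) allI impI)
  fix x x' :: nat
  assume H: "\<forall>(a, b)\<in>set ps. yab n a b x = yab n a b x'"
  have "\<forall>i. i \<le> n - 1 \<longrightarrow> x mod 2^i = x' mod 2^i"
  proof
    fix i show "i \<le> n - 1 \<longrightarrow> x mod 2^i = x' mod 2^i"
    proof (induction i)
      case 0 then show ?case by simp
    next
      case (Suc i)
      show ?case
      proof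
        assume le: "Suc i \<le> n - 1"
        hence lt: "Suc i < n" by simp
        have m: "x mod 2^i = x' mod 2^i" using Suc le by simp
        obtain p where p: "p \<in> set ps" "bit (snd p) i \<noteq> carry x (snd p) i"
          using assms(3)[OF lt] by blast
        obtain a b where ab: "p = (a,b)" by fastforce
        have a0: "a = 0" using assms(2) p(1) ab by auto
        have "yab n 0 b x = yab n 0 b x'" using H p(1) ab a0 by auto
        hence "bit x i = bit x' i" using step[OF lt m] p(2) ab by simp
        thus "x mod 2^Suc i = x' mod 2^Suc i" using m by (simp only: mod_Suc_split)
      qed
    qed
  qed
  thus "x mod 2 ^ (n - 1) = x' mod 2 ^ (n - 1)" by simp
qed

fun alt :: "nat \<Rightarrow> nat" where
  "alt 0 = 0" | "alt (Suc k) = 1 + 4 * alt k"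

lemma bit_alt: "bit (alt k) i = (even i \<and> i < 2*k)"
proof (induction k arbitrary: i)
  case 0 then show ?case by simp
next
  case (Suc k)
  show ?case
  proof (cases i)
    case 0 then show ?thesis by (simp add: bit_0)
  next
    case (Suc i1)
    show ?thesis
    proof (cases i1)
      case 0 then show ?thesis using Suc by (simp add: bit_Suc bit_0)
    next
      case (Suc i2)
      have "(1 + 4 * alt k) div 2 div 2 = alt k" by simp
      then show ?thesis using Suc \<open>i = Suc i1\<close> Suc.IH[of i2] by (simp add: bit_Suc)
    qed
  qed
qed

lemma alt_bound: "2 * alt k < 4^k"
proof (induction k)
  case 0 then show ?case by simp
next
  case (Suc k)
  define N :: nat where "N = 4^k"
  define m where "m = alt k"
  have "2*m < N" using Suc by (simp add: N_def m_def)
  hence "2 * (1 + 4 * m) < 4 * N" by presburger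
  thus ?case by (simp add: N_def m_def)
qed

lemma good:
  assumes "bit D 0" "\<And>i. 0 < i \<Longrightarrow> i < L \<Longrightarrow> bit D i \<noteq> bit D (i - 1)" "i < L"
  shows "bit D i \<noteq> carry x D i \<or> bit (2*D) i \<noteq> carry x (2*D) i"
proof (cases i)
  case 0 then show ?thesis using assms(1) by (simp add: carry_def)
next
  case (Suc k)
  have ne: "bit D (Suc k) \<noteq> bit D k" using assms(2)[of "Suc k"] assms(3) Suc by simp
  have m2: "(2*D) mod 2^Suc k = 2 * (D mod 2^k)"
    using mod_mult_mult1[of 2 D "2^k"] by simp
  have b2: "bit (2*D) (Suc k) = bit D k" by (simp add: bit_double_iff)
  have lt: "D mod 2^k < (2::nat)^k" by simp
  show ?thesis
  proof (cases "bit D k")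
    case False
    hence "D mod 2^Suc k = D mod 2^k" by (simp only: mod_Suc_split) simp
    hence "carry x D (Suc k) \<Longrightarrow> carry x (2*D) (Suc k)" unfolding carry_def m2 by linarith
    then show ?thesis using ne False b2 Suc by blast
  next
    case True
    hence "D mod 2^Suc k = D mod 2^k + 2^k" by (simp only: mod_Suc_split) simp
    hence "carry x (2*D) (Suc k) \<Longrightarrow> carry x D (Suc k)" unfolding carry_def m2 using lt by linarith
    then show ?thesis using ne True b2 Suc by blast
  qed
qed

lemma tb_add_exp:
  assumes "j < n" "\<not> bit (p::nat) j"
  shows "take_bit n (p + 2^j) = xor (take_bit n p) (2^j)"
proof -
  have "take_bit n (p + 2^j) = take_bit n (take_bit n p + take_bit n (2^j))"
    by (simp only: take_bit_add)
  also have "take_bit n (2^j) = (2::nat)^j" using assms(1) by simp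
  also have "take_bit n p + 2^j = xor (take_bit n p) (2^j)"
  proof (rule disjunctive_add_eq_xor)
    show "and (take_bit n p) (2 ^ j) = 0"
      by (rule bit_eqI) (use assms in \<open>auto simp: bit_and_iff bit_exp_iff bit_take_bit_iff\<close>)
  qed
  also have "take_bit n \<dots> = xor (take_bit n p) (2^j)" using assms(1) by simp
  finally show ?thesis .
qed

lemma collide:
  assumes "j < n" "\<not> bit (a+x) j" "\<not> bit (b+x) j"
  shows "yab n a b (x + 2^j) = yab n a b x"
proof -
  have "yab n a b (x + 2^j) = xor (take_bit n (a+x+2^j)) (take_bit n (b+x+2^j))"
    by (simp add: yab_def take_bit_eq_mod add.assoc)
  also have "\<dots> = xor (xor (take_bit n (a+x)) (2^j)) (xor (take_bit n (b+x)) (2^j))"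
    using tb_add_exp[OF assms(1,2)] tb_add_exp[OF assms(1,3)] by simp
  also have "\<dots> = xor (take_bit n (a+x)) (take_bit n (b+x))"
    by (simp add: ac_simps)
  also have "\<dots> = yab n a b x" by (simp add: yab_def take_bit_eq_mod)
  finally show ?thesis .
qed

lemma exists_col: "\<exists>x j. x < (4::nat) \<and> j < (2::nat) \<and> \<not> bit ((a::nat)+x) j \<and> \<not> bit ((b::nat)+x) j"
proof -
  have b1: "\<And>p. bit (p::nat) 1 = odd (p div 2)" by (simp add: bit_iff_odd)
  have b0: "\<And>p. bit (p::nat) 0 = odd p" by (simp add: bit_0)
  have "(even (a+0) \<and> even (b+0)) \<or> (even (a+1) \<and> even (b+1)) \<or>
     (even ((a+0) div 2) \<and> even ((b+0) div 2)) \<or> (even ((a+1) div 2) \<and> even ((b+1) div 2)) \<or>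
     (even ((a+2) div 2) \<and> even ((b+2) div 2)) \<or> (even ((a+3) div 2) \<and> even ((b+3) div 2))"
    by presburger
  then show ?thesis
  proof (elim disjE)
    assume "even (a+0) \<and> even (b+0)" thus ?thesis using b0 by (intro exI[of _ 0] exI[of _ 0]) simp
  next
    assume "even (a+1) \<and> even (b+1)" thus ?thesis using b0 by (intro exI[of _ 1] exI[of _ 0]) simp
  next
    assume "even ((a+0) div 2) \<and> even ((b+0) div 2)" thus ?thesis using b1 by (intro exI[of _ 0] exI[of _ 1]) simp
  next
    assume "even ((a+1) div 2) \<and> even ((b+1) div 2)" thus ?thesis using b1 by (intro exI[of _ 1] exI[of _ 1]) simp
  next
    assume "even ((a+2) div 2) \<and> even ((b+2) div 2)" thus ?thesis using b1 by (intro exI[of _ 2] exI[of _ 1]) simp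
  next
    assume "even ((a+3) div 2) \<and> even ((b+3) div 2)" thus ?thesis using b1 by (intro exI[of _ 3] exI[of _ 1]) simp
  qed
qed

lemma pow_ge4: "(n::nat) \<ge> 3 \<Longrightarrow> 4 \<le> (2::nat)^(n-1)"
  using power_increasing[of 2 "n-1" "2::nat"] by simp

lemma pow_ge8: "(n::nat) \<ge> 3 \<Longrightarrow> 8 \<le> (2::nat)^n"
  using power_increasing[of 3 "n" "2::nat"] by simp

lemma not_det_nil: "n \<ge> 2 \<Longrightarrow> \<not> determines n []"
proof
  assume n: "n \<ge> 2" and d: "determines n []"
  have M: "(2::nat) \<le> 2^(n-1)" using power_increasing[of 1 "n-1" "2::nat"] n by simp
  have "(2::nat) \<le> 2^n" using power_increasing[of 1 "n" "2::nat"] n by simp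
  hence o: "(1::nat) < 2^n" by linarith
  have H: "\<forall>x < 2 ^ n. \<forall>x' < 2 ^ n. x mod 2 ^ (n - 1) = x' mod (2::nat) ^ (n - 1)"
    using d unfolding determines_def list.set(1) ball_empty by blast
  have "0 mod 2 ^ (n - 1) = 1 mod (2::nat) ^ (n - 1)" using H[rule_format, of 0 1] o by simp
  thus False using M by simp
qed

lemma not_det_one: "n \<ge> 3 \<Longrightarrow> \<not> determines n [(a,b)]"
proof
  assume n: "n \<ge> 3" and d: "determines n [(a,b)]"
  obtain x j where xj: "x < (4::nat)" "j < (2::nat)" "\<not> bit (a+x) j" "\<not> bit (b+x) j"
    using exists_col by blast
  have jn: "j < n" using xj n by simp
  have c: "yab n a b (x + 2^j) = yab n a b x" by (rule collide[OF jn xj(3,4)])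
  have j2: "(2::nat)^j \<le> 2" using xj(2) by (cases j) auto
  have j1: "(1::nat) \<le> 2^j" by simp
  have M: "4 \<le> (2::nat)^(n-1)" using pow_ge4[OF n] .
  have N: "8 \<le> (2::nat)^n" using pow_ge8[OF n] .
  have "x < 2^n" "x + 2^j < 2^n" using xj j2 N by linarith+
  moreover have H: "\<forall>x<2^n. \<forall>x'<2^n. yab n a b x = yab n a b x' \<longrightarrow> x mod 2^(n-1) = x' mod (2::nat)^(n-1)"
    using d unfolding determines_def list.set(1) list.set(2) by blast
  ultimately have "x mod 2^(n-1) = (x + 2^j) mod 2^(n-1)"
    using c by metis
  moreover have "x mod 2^(n-1) = x" using xj(1) M by simp
  moreover have "(x + 2^j) mod 2^(n-1) \<noteq> x"
  proof (cases "x + 2^j < 2^(n-1)")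
    case True then show ?thesis using j1 by simp
  next
    case False
    hence "(x + 2^j) mod 2^(n-1) = x + 2^j - 2^(n-1)"
      using xj(1) j2 M by (simp add: le_mod_geq)
    then show ?thesis using j2 M False by linarith
  qed
  ultimately show False by simp
qed

lemma det_two:
  assumes n: "n \<ge> 3"
  shows "determines n [(0, alt (n div 2)), (0, 2 * alt (n div 2))]"
proof (rule det_gen)
  let ?k = "n div 2"
    have "2 * alt ?k < 4 ^ ?k" by (rule alt_bound)
  also have "(4::nat) ^ ?k = 2 ^ (2 * ?k)" by (simp add: power_mult)
  also have "\<dots> \<le> 2^n" by (rule power_increasing) auto
  finally have b: "2 * alt ?k < 2^n" .
  show "\<forall>(a, b)\<in>set [(0::nat, alt ?k), (0::nat, 2 * alt ?k)]. a < 2 ^ n \<and> b < 2 ^ n"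
    using b by auto
  show "\<forall>(a, b)\<in>set [(0, alt ?k), (0, 2 * alt ?k)]. a = 0" by auto
  fix x i assume i: "Suc i < n"
  have g: "bit (alt ?k) i \<noteq> carry x (alt ?k) i \<or> bit (2 * alt ?k) i \<noteq> carry x (2 * alt ?k) i"
  proof (rule good[where L = "n - 1"])
    show "bit (alt ?k) 0" using n by (simp add: bit_alt)
    show "\<And>i. 0 < i \<Longrightarrow> i < n - 1 \<Longrightarrow> bit (alt ?k) i \<noteq> bit (alt ?k) (i - 1)"
      by (auto simp: bit_alt)
    show "i < n - 1" using i by simp
  qed
  then show "\<exists>p\<in>set [(0, alt ?k), (0, 2 * alt ?k)]. bit (snd p) i \<noteq> carry x (snd p) i"
    by auto
qed

lemma det_n2: "determines 2 [(0, 1)]"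
proof (rule det_gen)
  show "\<forall>(a, b)\<in>set [(0::nat, 1::nat)]. a < 2 ^ 2 \<and> b < 2 ^ 2" by auto
  show "\<forall>(a, b)\<in>set [(0::nat, 1::nat)]. a = 0" by auto
  fix x i :: nat assume "Suc i < 2"
  hence "i = 0" by simp
  then show "\<exists>p\<in>set [(0::nat, 1::nat)]. bit (snd p) i \<noteq> carry x (snd p) i"
    by (simp add: carry_def bit_0)
qed

theorem proposition4:
  shows "mmin 2 = 1 \<and> (\<forall>n::nat. n > 2 \<longrightarrow> mmin n = 2)"
proof
  show "mmin 2 = 1" unfolding mmin_def
  proof (rule Least_equality)
    have "length [(0::nat,1::nat)] = 1" by simp
    with det_n2 show "\<exists>ps. length ps = 1 \<and> determines 2 ps" by blast
    fix m assume "\<exists>ps. length ps = m \<and> determines 2 ps"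
    then obtain ps where ps: "length ps = m" "determines 2 ps" by blast
    show "1 \<le> m"
    proof (rule ccontr)
      assume "\<not> 1 \<le> m"
      hence "m = 0" by simp
      hence "ps = []" using ps by simp
      thus False using ps not_det_nil[of 2] by simp
    qed
  qed
  show "\<forall>n::nat. n > 2 \<longrightarrow> mmin n = 2"
  proof (intro allI impI)
    fix n :: nat assume "n > 2"
    hence n: "n \<ge> 3" by simp
    show "mmin n = 2" unfolding mmin_def
    proof (rule Least_equality)
      have "length [(0::nat, alt (n div 2)), (0::nat, 2 * alt (n div 2))] = 2" by simp
      with det_two[OF n] show "\<exists>ps. length ps = 2 \<and> determines n ps" by blast
      fix m assume "\<exists>ps. length ps = m \<and> determines n ps"
      then obtain ps where ps: "length ps = m" "determines n ps" by blast
      show "2 \<le> m"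
      proof (rule ccontr)
        assume "\<not> 2 \<le> m"
        hence "m = 0 \<or> m = 1" by auto
        thus False
        proof
          assume "m = 0"
          hence "ps = []" using ps by simp
          thus False using ps not_det_nil[of n] n by simp
        next
          assume "m = 1"
          then obtain p where "ps = [p]" using ps(1) by (cases ps) auto
          moreover obtain a b where "p = (a,b)" by fastforce
          ultimately show False using ps(2) not_det_one[OF n, of a b] by simp
        qed
      qed
    qed
  qed
qed

end
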